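(* Let $\mathcal D$ be a $(\gamma,V)$-stable distribution of $\mathbf X$. For a set of families $A\subseteq\mathcal F_{d,k}$ and an equivalence class $E$, let $E^{\cap A}:=\{G\in E: A\subseteq G\}$. Let $E_*$ be an optimal equivalence class, let $G^*\in E_*^{\cap A}$, and suppose there is an equivalence class $\tilde E\in\mathcal E_{d,k}$ with $\tilde E\neq E_*$, $\mathcal S(\tilde E)\ge\mathcal S^*-\gamma$ and $\tilde E^{\cap A}\neq\emptyset$. Then there exists a graph $\tilde G\in\tilde E^{\cap A}$ such that the families of all the variables in $V$ are the same in $G^*$ and in $\tilde G$.
   Context: $\mathbf X=(X_1,\dots,X_d)$ is a random vector; $k$ a fixed positive integer. A family is $\langle X_i,\Pi\rangle$ with $\Pi\subseteq\mathbf X\setminus\{X_i\}$, $|\Pi|\le k$, and $H(\langle X_i,\Pi\rangle)=H(X_i\mid\Pi)$; $\mathcal F_{d,k}$ is the set of families. $\mathcal G_{d,k}$ = DAGs over $\mathbf X$ with in-degree $\le k$, identified with their family sets; $\mathcal S(F)=-\sum_{f\in F}H(f)$; $\mathcal S^*=\max_{G\in\mathcal G_{d,k}}\mathcal S(G)$. $\mathcal E_{d,k}$ is the set of Markov equivalence classes (ECs) on $\mathcal G_{d,k}$ (DAGs with the same conditional independence constraints), which share a score $\mathcal S(E)$; an optimal EC has score $\mathcal S^*$. For $V\subseteq\mathbf X$, $\mathcal G_V$ is the set of DAGs over $V$ with in-degree at most $k$. $(\gamma,V)$-stable: for $\gamma>0$ and $V\subseteq\mathbf X$, (1) in every $G\in\mathcal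 G_{d,k}$ with $\mathcal S(G)\ge\mathcal S^*-\gamma$ all parents of every variable in $V$ are in $V$; (2) for the marginal distribution on $V$ (over $\mathcal G_V$) there is a unique optimal EC and the score gap between the best and second-best EC is more than $\gamma$. *)

theory Defs
  imports "HOL-Probability.Probability_Mass_Function" "HOL-Library.FuncSet"
begin

text \<open>Variables are indexed by natural numbers; X = (X_0,...,X_{d-1}).
  The joint distribution of X is a pmf p on assignments nat => 'b with finite support.
  A family is a pair (i, Pi) of a variable index and a parent set.\<close>

type_synonym family = "nat \<times> nat set"

definition ent :: "(nat \<Rightarrow> 'b) pmf \<Rightarrow> nat set \<Rightarrow> real" where
  "ent p S = - (\<Sum>y \<in> (\<lambda>x. restrict x S) ` set_pmf p.
       (let q = measure_pmf.prob p {x. restrict x S = y} in q * log 2 q))"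

text \<open>H(<X_i, Pi>) = H(X_i | Pi) = H(X_i, Pi) - H(Pi).\<close>
definition fam_ent :: "(nat \<Rightarrow> 'b) pmf \<Rightarrow> family \<Rightarrow> real" where
  "fam_ent p f = ent p (insert (fst f) (snd f)) - ent p (snd f)"

definition families :: "nat \<Rightarrow> nat \<Rightarrow> family set" where
  "families d k = {(i, P). i < d \<and> P \<subseteq> {..<d} - {i} \<and> card P \<le> k}"

definition score :: "(nat \<Rightarrow> 'b) pmf \<Rightarrow> family set \<Rightarrow> real" where
  "score p F = - (\<Sum>f\<in>F. fam_ent p f)"

definition edges :: "family set \<Rightarrow> (nat \<times> nat) set" where
  "edges G = {(j, i). \<exists>P. (i, P) \<in> G \<and> j \<in> P}"

definition dag :: "nat set \<Rightarrow> nat \<Rightarrow> family set \<Rightarrow> bool" where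
  "dag V k G \<longleftrightarrow> (\<forall>f\<in>G. fst f \<in> V \<and> snd f \<subseteq> V - {fst f} \<and> card (snd f) \<le> k)
     \<and> (\<forall>i\<in>V. \<exists>!P. (i, P) \<in> G) \<and> acyclic (edges G)"

definition dags :: "nat set \<Rightarrow> nat \<Rightarrow> family set set" where
  "dags V k = {G. dag V k G}"

definition is_collider :: "family set \<Rightarrow> nat list \<Rightarrow> nat \<Rightarrow> bool" where
  "is_collider G xs m \<longleftrightarrow> (xs ! (m - 1), xs ! m) \<in> edges G \<and> (xs ! (m + 1), xs ! m) \<in> edges G"

definition d_connecting :: "family set \<Rightarrow> nat set \<Rightarrow> nat list \<Rightarrow> bool" where
  "d_connecting G Z xs \<longleftrightarrow> length xs \<ge> 2 \<and> distinct xs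
     \<and> (\<forall>m. Suc m < length xs \<longrightarrow>
            (xs ! m, xs ! Suc m) \<in> edges G \<or> (xs ! Suc m, xs ! m) \<in> edges G)
     \<and> (\<forall>m. 0 < m \<and> Suc m < length xs \<longrightarrow>
            (if is_collider G xs m then (\<exists>z\<in>Z. (xs ! m, z) \<in> (edges G)\<^sup>*)
             else xs ! m \<notin> Z))"

definition d_sep :: "family set \<Rightarrow> nat set \<Rightarrow> nat set \<Rightarrow> nat set \<Rightarrow> bool" where
  "d_sep G X Y Z \<longleftrightarrow> (\<forall>xs. hd xs \<in> X \<and> last xs \<in> Y \<longrightarrow> \<not> d_connecting G Z xs)"

definition markov_equiv :: "nat set \<Rightarrow> family set \<Rightarrow> family set \<Rightarrow> bool" where
  "markov_equiv V G1 G2 \<longleftrightarrow> (\<forall>X Y Z. X \<subseteq> V \<and> Y \<subseteq> V \<and> Z \<subseteq> V \<and> X \<noteq> {} \<and> Y \<noteq> {}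
      \<and> X \<inter> Y = {} \<and> X \<inter> Z = {} \<and> Y \<inter> Z = {} \<longrightarrow> (d_sep G1 X Y Z \<longleftrightarrow> d_sep G2 X Y Z))"

definition is_EC :: "nat set \<Rightarrow> nat \<Rightarrow> family set set \<Rightarrow> bool" where
  "is_EC V k E \<longleftrightarrow> (\<exists>G. dag V k G \<and> E = {G'. dag V k G' \<and> markov_equiv V G G'})"

text \<open>Optimal score S* over DAGs on V (V finite).\<close>
definition opt_score :: "(nat \<Rightarrow> 'b) pmf \<Rightarrow> nat set \<Rightarrow> nat \<Rightarrow> real" where
  "opt_score p V k = Max (score p ` dags V k)"

definition cap :: "family set set \<Rightarrow> family set \<Rightarrow> family set set" where
  "cap E A = {G\<in>E. A \<subseteq> G}"

text \<open>(gamma,V)-stability of p (with X = X_0..X_{d-1}). The score of an EC is the common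
  score of its members; it is rendered by quantifying over the members.\<close>
definition stable :: "(nat \<Rightarrow> 'b) pmf \<Rightarrow> nat \<Rightarrow> nat \<Rightarrow> real \<Rightarrow> nat set \<Rightarrow> bool" where
  "stable p d k \<gamma> V \<longleftrightarrow> \<gamma> > 0 \<and> V \<subseteq> {..<d}
     \<and> (\<forall>G. dag {..<d} k G \<and> score p G \<ge> opt_score p {..<d} k - \<gamma> \<longrightarrow>
            (\<forall>f\<in>G. fst f \<in> V \<longrightarrow> snd f \<subseteq> V))
     \<and> (\<exists>E0. is_EC V k E0 \<and> (\<forall>G\<in>E0. score p G = opt_score p V k)
          \<and> (\<forall>E. is_EC V k E \<and> E \<noteq> E0 \<longrightarrow> (\<forall>G\<in>E. score p G < opt_score p V k - \<gamma>)))"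

end

theory Submission
  imports Defs
begin

definition adjE :: "(nat \<times> nat) set \<Rightarrow> nat \<Rightarrow> nat \<Rightarrow> bool" where
  "adjE E a b \<longleftrightarrow> (a,b) \<in> E \<or> (b,a) \<in> E"

definition tri :: "(nat \<times> nat) set \<Rightarrow> nat set \<Rightarrow> nat \<Rightarrow> nat \<Rightarrow> nat \<Rightarrow> bool" where
  "tri E Z a v b \<longleftrightarrow> (if (a,v) \<in> E \<and> (b,v) \<in> E then (\<exists>z\<in>Z. (v,z) \<in> E\<^sup>*) else v \<notin> Z)"

fun wk :: "(nat \<times> nat) set \<Rightarrow> nat set \<Rightarrow> nat list \<Rightarrow> bool" where
  "wk E Z [] = True"
| "wk E Z [a] = True"
| "wk E Z [a, b] = adjE E a b"
| "wk E Z (a # b # c # rest) = (adjE E a b \<and> tri E Z a b c \<and> wk E Z (b # c # rest))"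

lemma wk_cons2: "wk E Z (x # y # zs) \<longleftrightarrow> adjE E x y \<and> (zs \<noteq> [] \<longrightarrow> tri E Z x y (hd zs)) \<and> wk E Z (y # zs)"
  by (cases zs) auto

lemma wk_split: "wk E Z (xs @ a # b # ys) \<longleftrightarrow> wk E Z (xs @ [a, b]) \<and> wk E Z (a # b # ys)"
proof (induction xs)
  case Nil
  then show ?case by (simp add: wk_cons2)
next
  case (Cons x xs)
  show ?case
  proof (cases xs)
    case Nil
    then show ?thesis using Cons by (simp add: wk_cons2)
  next
    case (Cons y zs)
    then show ?thesis using Cons.IH by (cases zs) (simp_all add: wk_cons2)
  qed
qed

lemma wk_suffix: "wk E Z (xs @ ys) \<Longrightarrow> wk E Z ys"
proof (induction xs)
  case Nil then show ?case by simp
next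
  case (Cons x xs)
  then show ?case by (cases "xs @ ys") (auto simp: wk_cons2)
qed

lemma wk_prefix: "wk E Z (xs @ ys) \<Longrightarrow> wk E Z xs"
proof (induction xs rule: wk.induct)
  case (3 E Z a b) then show ?case by (simp add: wk_cons2)
next
  case (4 E Z a b c rest) then show ?case by (simp add: wk_cons2)
qed auto

lemma is_collider_iff: "is_collider G xs m \<longleftrightarrow> (xs!(m-1), xs!m) \<in> edges G \<and> (xs!Suc m, xs!m) \<in> edges G"
  by (simp add: is_collider_def)

lemma all_nat_split: "(\<forall>m::nat. P m) \<longleftrightarrow> P 0 \<and> (\<forall>m. P (Suc m))"
  by (metis not0_implies_Suc)

lemma idx_wk: "((\<forall>m. Suc m < length xs \<longrightarrow> adjE E (xs!m) (xs!Suc m)) \<and>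
   (\<forall>m. 0 < m \<and> Suc m < length xs \<longrightarrow> tri E Z (xs!(m-1)) (xs!m) (xs!Suc m))) \<longleftrightarrow> wk E Z xs"
proof (induction xs rule: wk.induct)
  case (3 E Z a b)
  then show ?case by (auto simp: all_nat_split[of "\<lambda>m. Suc m < _ \<longrightarrow> _"])
next
  case (4 E Z a b c rest)
  let ?xs = "a # b # c # rest"
  have A: "(\<forall>m. Suc m < length ?xs \<longrightarrow> adjE E (?xs!m) (?xs!Suc m)) \<longleftrightarrow>
     adjE E a b \<and> (\<forall>m. Suc m < length (b#c#rest) \<longrightarrow> adjE E ((b#c#rest)!m) ((b#c#rest)!Suc m))"
    by (subst all_nat_split) simp
  have B: "(\<forall>m. 0 < m \<and> Suc m < length ?xs \<longrightarrow> tri E Z (?xs!(m-1)) (?xs!m) (?xs!Suc m)) \<longleftrightarrow>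
     tri E Z a b c \<and> (\<forall>m. 0 < m \<and> Suc m < length (b#c#rest) \<longrightarrow> tri E Z ((b#c#rest)!(m-1)) ((b#c#rest)!m) ((b#c#rest)!Suc m))"
  proof (intro iffI conjI allI impI)
    assume H: "\<forall>m. 0 < m \<and> Suc m < length ?xs \<longrightarrow> tri E Z (?xs!(m-1)) (?xs!m) (?xs!Suc m)"
    show "tri E Z a b c" using H[rule_format, of 1] by simp
    fix m assume m: "0 < m \<and> Suc m < length (b#c#rest)"
    then show "tri E Z ((b#c#rest)!(m-1)) ((b#c#rest)!m) ((b#c#rest)!Suc m)"
      using H[rule_format, of "Suc m"] by (cases m) auto
  next
    fix m assume H: "tri E Z a b c \<and> (\<forall>m. 0 < m \<and> Suc m < length (b#c#rest) \<longrightarrow> tri E Z ((b#c#rest)!(m-1)) ((b#c#rest)!m) ((b#c#rest)!Suc m))"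
      and m: "0 < m \<and> Suc m < length ?xs"
    show "tri E Z (?xs!(m-1)) (?xs!m) (?xs!Suc m)"
    proof (cases "m = 1")
      case True then show ?thesis using H by simp
    next
      case False
      then obtain m' where "m = Suc m'" "0 < m'" using m by (cases m) auto
      then show ?thesis using H m by auto
    qed
  qed
  show ?case using A B 4 unfolding wk.simps by blast
qed auto

lemma d_connecting_wk: "d_connecting G Z xs \<longleftrightarrow> length xs \<ge> 2 \<and> distinct xs \<and> wk (edges G) Z xs"
  unfolding d_connecting_def idx_wk[symmetric] is_collider_iff tri_def adjE_def by auto

inductive reach :: "(nat \<times> nat) set \<Rightarrow> nat set \<Rightarrow> nat set \<Rightarrow> nat \<Rightarrow> bool \<Rightarrow> bool"
  for E Z S where
  base: "x \<in> S \<Longrightarrow> x \<notin> Z \<Longrightarrow> reach E Z S x False"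
| dn: "reach E Z S u d \<Longrightarrow> u \<notin> Z \<Longrightarrow> (u,v) \<in> E \<Longrightarrow> reach E Z S v True"
| up: "reach E Z S u d \<Longrightarrow> d = (u \<in> Z) \<Longrightarrow> (v,u) \<in> E \<Longrightarrow> reach E Z S v False"

lemma acyc_antisym: "acyclic E \<Longrightarrow> (a,b) \<in> E \<Longrightarrow> (b,a) \<notin> E"
  by (meson acyclic_def trancl.r_into_trancl trancl_into_trancl)

lemma acyc_irrefl: "acyclic E \<Longrightarrow> (a,a) \<notin> E"
  by (meson acyclic_def r_into_trancl')

lemma descent:
  assumes "(u,z) \<in> E\<^sup>*" "z \<in> Z" "reach E Z S u True"
  shows "u \<in> Z \<or> reach E Z S u False"
  using assms
proof (induction rule: converse_rtrancl_induct)
  case base then show ?case by simp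
next
  case (step u w)
  show ?case
  proof (cases "u \<in> Z")
    case False
    then have "reach E Z S w True" using step reach.dn by blast
    then have "w \<in> Z \<or> reach E Z S w False" using step by blast
    then show ?thesis
    proof
      assume "w \<in> Z" then show ?thesis using reach.up[of E Z S w True u] \<open>reach E Z S w True\<close> step by auto
    next
      assume r: "reach E Z S w False"
      show ?thesis
      proof (cases "w \<in> Z")
        case True then show ?thesis using reach.up[of E Z S w True u] \<open>reach E Z S w True\<close> step by auto
      next
        case False then show ?thesis using reach.up[of E Z S w False u] r step by auto
      qed
    qed
  qed simp
qed

lemma path_reach_aux:
  assumes ac: "acyclic E"
  shows "reach E Z S u ((t,u) \<in> E) \<Longrightarrow> wk E Z (t # u # rest) \<Longrightarrow> \<exists>d. reach E Z S (last (u # rest)) d"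
proof (induction rest arbitrary: t u)
  case Nil then show ?case by auto
next
  case (Cons c r)
  have adj: "adjE E u c" and tr: "tri E Z t u c" and w: "wk E Z (u # c # r)"
    using Cons.prems by (auto simp: wk_cons2)
  have "reach E Z S c ((u,c) \<in> E)"
  proof (cases "(u,c) \<in> E")
    case True
    then have "(c,u) \<notin> E" using acyc_antisym[OF ac] by blast
    then have "u \<notin> Z" using tr by (auto simp: tri_def)
    then show ?thesis using reach.dn Cons.prems(1) True by auto
  next
    case False
    then have cu: "(c,u) \<in> E" using adj by (auto simp: adjE_def)
    show ?thesis
    proof (cases "(t,u) \<in> E")
      case True
      then obtain z where "z \<in> Z" "(u,z) \<in> E\<^sup>*" using tr cu by (auto simp: tri_def)
      then have "u \<in> Z \<or> reach E Z S u False" using descent Cons.prems(1) True by auto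
      then show ?thesis
      proof
        assume "u \<in> Z" then show ?thesis using reach.up[of E Z S u True c] Cons.prems(1) True cu False by auto
      next
        assume r: "reach E Z S u False"
        show ?thesis
        proof (cases "u \<in> Z")
          case True then show ?thesis using reach.up[of E Z S u True c] Cons.prems(1) \<open>(t,u)\<in>E\<close> cu False by auto
        next
          case F: False then show ?thesis using reach.up[of E Z S u False c] r cu False by auto
        qed
      qed
    next
      case tF: False
      then have "u \<notin> Z" using tr by (auto simp: tri_def)
      then show ?thesis using reach.up[of E Z S u False c] Cons.prems(1) tF cu False by auto
    qed
  qed
  then show ?case using Cons.IH[OF _ w] by simp
qed

lemma path_reach:
  assumes ac: "acyclic (edges G)" and dc: "d_connecting G Z xs" and h: "hd xs \<in> X" and l: "last xs \<in> Y"
    and XZ: "X \<inter> Z = {}"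
  shows "\<exists>y\<in>Y. \<exists>d. reach (edges G) Z X y d"
proof -
  let ?E = "edges G"
  from dc have len: "length xs \<ge> 2" and w: "wk ?E Z xs" by (auto simp: d_connecting_wk)
  then obtain x b rest where xs: "xs = x # b # rest" by (cases xs; cases "tl xs") auto
  have x: "x \<in> X" "x \<notin> Z" using h XZ xs by auto
  have r0: "reach ?E Z X x False" using x reach.base by auto
  have adj: "adjE ?E x b" using w xs by (auto simp: wk_cons2)
  have "reach ?E Z X b ((x,b) \<in> ?E)"
  proof (cases "(x,b) \<in> ?E")
    case True then show ?thesis using reach.dn[OF r0] x by auto
  next
    case False then show ?thesis using reach.up[OF r0] x adj by (auto simp: adjE_def)
  qed
  then obtain d where "reach ?E Z X (last (b # rest)) d" using path_reach_aux[OF ac _ ] w xs by blast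
  then show ?thesis using l xs by auto
qed

lemma reach_walk:
  assumes ac: "acyclic E"
  shows "reach E Z S u d \<Longrightarrow> \<exists>ws. wk E Z (ws @ [u]) \<and> hd (ws @ [u]) \<in> S \<and> (ws = [] \<longrightarrow> d = False)
      \<and> (ws \<noteq> [] \<longrightarrow> d = ((last ws, u) \<in> E))"
proof (induction rule: reach.induct)
  case (base x)
  then show ?case by (intro exI[of _ "[]"]) auto
next
  case (dn u d v)
  then obtain ws where ws: "wk E Z (ws @ [u])" "hd (ws @ [u]) \<in> S" "ws = [] \<longrightarrow> d = False"
      "ws \<noteq> [] \<longrightarrow> d = ((last ws, u) \<in> E)" by blast
  have vu: "(v,u) \<notin> E" using acyc_antisym[OF ac dn.hyps(3)] .
  have "wk E Z ((ws @ [u]) @ [v])"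
  proof (cases ws rule: rev_cases)
    case Nil then show ?thesis using dn.hyps by (simp add: adjE_def)
  next
    case (snoc ws' t)
    have "wk E Z (ws' @ [t, u])" using ws snoc by simp
    moreover have "adjE E t u" using wk_suffix[of E Z ws' "[t,u]"] calculation by simp
    moreover have "tri E Z t u v" using vu dn.hyps by (auto simp: tri_def)
    ultimately have "wk E Z (ws' @ t # u # [v])" using wk_split[of E Z ws' t u "[v]"]
      dn.hyps by (simp add: adjE_def)
    then show ?thesis using snoc by simp
  qed
  then show ?case using ws dn.hyps by (intro exI[of _ "ws @ [u]"]) (auto simp: hd_append)
next
  case (up u d v)
  then obtain ws where ws: "wk E Z (ws @ [u])" "hd (ws @ [u]) \<in> S" "ws = [] \<longrightarrow> d = False"
      "ws \<noteq> [] \<longrightarrow> d = ((last ws, u) \<in> E)" by blast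
  have uv: "(u,v) \<notin> E" using acyc_antisym[OF ac up.hyps(3)] .
  have "wk E Z ((ws @ [u]) @ [v])"
  proof (cases ws rule: rev_cases)
    case Nil then show ?thesis using up.hyps by (simp add: adjE_def)
  next
    case (snoc ws' t)
    have "wk E Z (ws' @ [t, u])" using ws snoc by simp
    moreover have "adjE E t u" using wk_suffix[of E Z ws' "[t,u]"] calculation by simp
    moreover have "tri E Z t u v" using up.hyps ws snoc by (auto simp: tri_def)
    ultimately have "wk E Z (ws' @ t # u # [v])" using wk_split[of E Z ws' t u "[v]"]
      up.hyps by (simp add: adjE_def)
    then show ?thesis using snoc by simp
  qed
  then show ?case using ws up.hyps uv by (intro exI[of _ "ws @ [u]"]) (auto simp: hd_append)
qed

fun fwdE :: "(nat \<times> nat) set \<Rightarrow> nat list \<Rightarrow> bool" where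
  "fwdE E (a # b # r) = ((a,b) \<in> E \<and> fwdE E (b # r))"
| "fwdE E _ = True"

lemma fwd_split: "fwdE E (l1 @ a # b # l2) \<Longrightarrow> (a,b) \<in> E"
proof (induction l1)
  case Nil then show ?case by simp
next
  case (Cons x l1) then show ?case by (cases l1) auto
qed

lemma fwd_walk:
  "wk E Z (v # rest) \<Longrightarrow> rest \<noteq> [] \<Longrightarrow> (v, hd rest) \<in> E \<Longrightarrow> \<not>(\<exists>z\<in>Z. (v,z) \<in> E\<^sup>*) \<Longrightarrow> fwdE E (v # rest)"
proof (induction rest arbitrary: v)
  case Nil then show ?case by simp
next
  case (Cons b r)
  have nb: "\<not>(\<exists>z\<in>Z. (b,z) \<in> E\<^sup>*)" using Cons.prems(3,4)
    by (auto intro: converse_rtrancl_into_rtrancl)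
  show ?case
  proof (cases r)
    case Nil then show ?thesis using Cons.prems by simp
  next
    case (Cons c r')
    have w: "adjE E b c" "tri E Z v b c" "wk E Z (b # c # r')" using Cons.prems \<open>r = c # r'\<close>
      by (auto simp: wk_cons2)
    have "(c,b) \<notin> E" using w(2) nb Cons.prems(3) by (auto simp: tri_def)
    then have "(b,c) \<in> E" using w(1) by (auto simp: adjE_def)
    then have "fwdE E (b # r)" using Cons.IH[of b] w(3) nb \<open>r = c # r'\<close> by simp
    then show ?thesis using Cons.prems(3) by simp
  qed
qed

lemma shortcut:
  assumes ac: "acyclic E" and XY: "X \<inter> Y = {}"
  shows "wk E Z xs \<Longrightarrow> xs \<noteq> [] \<Longrightarrow> hd xs \<in> X \<Longrightarrow> last xs \<in> Y \<Longrightarrow>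
    \<exists>ys. length ys \<ge> 2 \<and> distinct ys \<and> wk E Z ys \<and> hd ys \<in> X \<and> last ys \<in> Y"
proof (induction "length xs" arbitrary: xs rule: less_induct)
  case less
  show ?case
  proof (cases "distinct xs")
    case True
    have "length xs \<noteq> 1"
    proof
      assume "length xs = 1"
      then obtain x where "xs = [x]" by (cases xs) auto
      then show False using less.prems XY by auto
    qed
    then have "length xs \<ge> 2" using less.prems(2) by (cases xs) (auto simp: Suc_le_eq)
    then show ?thesis using True less.prems by blast
  next
    case False
    then obtain as v bs cs where xs: "xs = as @ [v] @ bs @ [v] @ cs" using not_distinct_decomp by blast
    let ?ys = "as @ v # cs"
    have shorter: "length ?ys < length xs" using xs by simp
    have hd: "hd ?ys \<in> X" using less.prems(3) xs by (cases as) auto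
    have lst: "last ?ys \<in> Y" using less.prems(4) xs by (cases cs) auto
    have wys: "wk E Z ?ys"
    proof (cases "as = []")
      case True
      then show ?thesis using wk_suffix[of E Z "v # bs"] less.prems(1) xs by simp
    next
      case asne: False
      show ?thesis
      proof (cases "cs = []")
        case True
        then show ?thesis using wk_prefix[of E Z "as @ [v]"] less.prems(1) xs by simp
      next
        case csne: False
        obtain as' u where as: "as = as' @ [u]" using asne by (cases as rule: rev_cases) auto
        obtain w cs' where cs: "cs = w # cs'" using csne by (cases cs) auto
        have W: "wk E Z (as' @ u # v # bs @ v # w # cs')" using less.prems(1) xs as cs by simp
        have bsne: "bs \<noteq> []"
        proof
          assume "bs = []"
          then have "wk E Z (v # v # w # cs')" using wk_suffix[of E Z "as' @ [u]" "v # v # w # cs'"] W by simp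
          then have "adjE E v v" by (simp add: wk_cons2)
          then show False using acyc_irrefl[OF ac] by (auto simp: adjE_def)
        qed
        obtain b1 bs1 where bs1: "bs = b1 # bs1" using bsne by (cases bs) auto
        obtain bs0 b2 where bs2: "bs = bs0 @ [b2]" using bsne by (cases bs rule: rev_cases) auto
        have pre: "wk E Z (as' @ [u, v])" using wk_prefix[of E Z "as' @ [u, v]"] W by simp
        have s1: "wk E Z (u # v # b1 # bs1 @ v # w # cs')" using wk_suffix[of E Z as' "u # v # b1 # bs1 @ v # w # cs'"] W bs1 by simp
        then have auv: "adjE E u v" and t1: "tri E Z u v b1" by (auto simp: wk_cons2)
        have s2: "wk E Z (b2 # v # w # cs')" using wk_suffix[of E Z "as' @ u # v # bs0" "b2 # v # w # cs'"] W bs2 by simp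
        then have t2: "tri E Z b2 v w" and s3: "wk E Z (v # w # cs')" by (auto simp: wk_cons2)
        have sv: "wk E Z (v # bs @ v # w # cs')" using wk_suffix[of E Z "as' @ [u]" "v # bs @ v # w # cs'"] W by simp
        have tj: "tri E Z u v w"
        proof (cases "(u,v) \<in> E \<and> (w,v) \<in> E")
          case True
          have "\<exists>z\<in>Z. (v,z) \<in> E\<^sup>*"
          proof (rule ccontr)
            assume nA: "\<not> (\<exists>z\<in>Z. (v,z) \<in> E\<^sup>*)"
            then have "(b1,v) \<notin> E" using t1 True by (auto simp: tri_def)
            moreover have "adjE E v b1" using sv bs1 by (simp add: wk_cons2)
            ultimately have "(v,b1) \<in> E" by (auto simp: adjE_def)
            then have "fwdE E (v # bs @ v # w # cs')" using fwd_walk[OF sv] nA bs1 by simp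
            then have "(v,w) \<in> E" using fwd_split[of E "v # bs" v w cs'] by simp
            then show False using True acyc_antisym[OF ac] by blast
          qed
          then show ?thesis using True by (simp add: tri_def)
        next
          case False
          have "v \<notin> Z"
          proof
            assume "v \<in> Z"
            then have "(u,v) \<in> E" using t1 by (auto simp: tri_def split: if_splits)
            moreover have "(w,v) \<in> E" using t2 \<open>v \<in> Z\<close> by (auto simp: tri_def split: if_splits)
            ultimately show False using False by blast
          qed
          then show ?thesis using False unfolding tri_def by auto
        qed
        have "wk E Z (as' @ u # v # w # cs')" using wk_split[of E Z as' u v "w # cs'"] pre auv tj s3
          by (simp add: wk_cons2)
        then show ?thesis using as cs by simp
      qed
    qed
    show ?thesis using less.hyps[OF shorter wys _ hd lst] by simp
  qed
qed

lemma d_sep_reach: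
  assumes ac: "acyclic (edges G)" and XY: "X \<inter> Y = {}" and XZ: "X \<inter> Z = {}"
  shows "d_sep G X Y Z \<longleftrightarrow> \<not> (\<exists>y\<in>Y. \<exists>d. reach (edges G) Z X y d)"
proof
  assume ds: "d_sep G X Y Z"
  show "\<not> (\<exists>y\<in>Y. \<exists>d. reach (edges G) Z X y d)"
  proof
    assume "\<exists>y\<in>Y. \<exists>d. reach (edges G) Z X y d"
    then obtain y d where y: "y \<in> Y" "reach (edges G) Z X y d" by blast
    from reach_walk[OF ac y(2)] obtain ws where ws: "wk (edges G) Z (ws @ [y])" "hd (ws @ [y]) \<in> X" by blast
    from shortcut[OF ac XY ws(1) _ ws(2)] y(1) obtain ys where
      "length ys \<ge> 2" "distinct ys" "wk (edges G) Z ys" "hd ys \<in> X" "last ys \<in> Y" by auto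
    then show False using ds by (auto simp: d_sep_def d_connecting_wk)
  qed
next
  assume "\<not> (\<exists>y\<in>Y. \<exists>d. reach (edges G) Z X y d)"
  then show "d_sep G X Y Z" unfolding d_sep_def using path_reach[OF ac _ _ _ XZ, of _ Y] by blast
qed

lemma covered_sim:
  fixes E E' :: "(nat \<times> nat) set"
  assumes ab: "(a,b) \<in> E" and ba: "(b,a) \<notin> E" and aa: "(a,a) \<notin> E"
    and cov: "\<And>p. (p,b) \<in> E \<longleftrightarrow> p = a \<or> (p,a) \<in> E"
    and E': "E' = insert (b,a) (E - {(a,b)})"
  shows "reach E Z S u d \<Longrightarrow>
    (if u = a then (d \<longrightarrow> reach E' Z S a True \<and> reach E' Z S b True) \<and>
        (\<not>d \<longrightarrow> reach E' Z S a False \<or> (b \<in> Z \<and> reach E' Z S a True \<and> reach E' Z S b True) \<or> (b \<notin> Z \<and> reach E' Z S b False))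
     else if u = b then (d \<longrightarrow> (reach E' Z S a True \<and> reach E' Z S b True) \<or> (a \<notin> Z \<and> reach E' Z S a False)
            \<or> (a \<notin> Z \<and> b \<notin> Z \<and> reach E' Z S b False)) \<and> (\<not>d \<longrightarrow> reach E' Z S b False)
     else reach E' Z S u d)"
proof (induction rule: reach.induct)
  note R = reach.intros[where E=E' and Z=Z and S=S]
  have anb: "a \<noteq> b" using ab aa by auto
  have bb: "(b,b) \<notin> E" using cov[of b] anb ba by auto
  have E'iff: "\<And>x y. (x,y) \<in> E' \<longleftrightarrow> (x,y) = (b,a) \<or> ((x,y) \<in> E \<and> (x,y) \<noteq> (a,b))" using E' by auto
  {
    case (base x)
    then show ?case using R(1)[of x] by auto
  next
    case (dn u d v)
    show ?case
    proof (cases "u = a")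
      case ua: True
      show ?thesis
      proof (cases "v = b")
        case vb: True
        then show ?thesis using dn ua anb by (cases d) auto
      next
        case vnb: False
        have va: "v \<noteq> a" using dn.hyps(3) ua aa by auto
        have e: "(a,v) \<in> E'" using E'iff dn.hyps(3) ua vnb by auto
        have "\<exists>d'. reach E' Z S a d'"
        proof (cases d)
          case True then show ?thesis using dn.IH ua by auto
        next
          case False
          then have "reach E' Z S a False \<or> (b \<in> Z \<and> reach E' Z S a True \<and> reach E' Z S b True) \<or> (b \<notin> Z \<and> reach E' Z S b False)"
            using dn.IH ua by auto
          then show ?thesis
          proof (elim disjE)
            assume "b \<notin> Z \<and> reach E' Z S b False"
            then have "reach E' Z S a True" using R(2)[of b False a] E'iff by auto
            then show ?thesis by blast
          qed auto
        qed
        then obtain d' where "reach E' Z S a d'" by blast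
        then have "reach E' Z S v True" using R(2) e dn.hyps(2) ua by blast
        then show ?thesis using va vnb by auto
      qed
    next
      case una: False
      show ?thesis
      proof (cases "u = b")
        case ub: True
        have va: "v \<noteq> a" "v \<noteq> b" using dn.hyps(3) ub ba bb by auto
        have e: "(b,v) \<in> E'" using E'iff dn.hyps(3) ub va by auto
        have "\<exists>d'. reach E' Z S b d'"
        proof (cases d)
          case True
          then have "(reach E' Z S a True \<and> reach E' Z S b True) \<or> (a \<notin> Z \<and> reach E' Z S a False)
            \<or> (a \<notin> Z \<and> b \<notin> Z \<and> reach E' Z S b False)" using dn.IH ub anb by auto
          then show ?thesis
          proof (elim disjE)
            assume "a \<notin> Z \<and> reach E' Z S a False"
            then have "reach E' Z S b False" using R(3)[of a False b] E'iff by auto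
            then show ?thesis by blast
          qed auto
        next
          case False then show ?thesis using dn.IH ub anb by auto
        qed
        then obtain d' where "reach E' Z S b d'" by blast
        then have "reach E' Z S v True" using R(2) e dn.hyps(2) ub by blast
        then show ?thesis using va by auto
      next
        case unb: False
        have ru: "reach E' Z S u d" using dn.IH una unb by auto
        show ?thesis
        proof (cases "v = a \<or> v = b")
          case True
          then have "(u,a) \<in> E" "(u,b) \<in> E" using cov[of u] dn.hyps(3) una by auto
          then have "(u,a) \<in> E'" "(u,b) \<in> E'" using E'iff una unb by auto
          then have "reach E' Z S a True" "reach E' Z S b True" using R(2)[OF ru dn.hyps(2)] by auto
          then show ?thesis using True anb by auto
        next
          case False
          then have "(u,v) \<in> E'" using E'iff dn.hyps(3) by auto
          then show ?thesis using R(2)[OF ru dn.hyps(2)] False by auto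
        qed
      qed
    qed
  next
    case (up u d v)
    show ?case
    proof (cases "u = a")
      case ua: True
      have vab: "v \<noteq> a" "v \<noteq> b" using up.hyps(3) ua aa ba by auto
      have e: "(v,a) \<in> E'" "(v,b) \<in> E'" using E'iff up.hyps(3) ua vab cov[of v] by auto
      have "reach E' Z S v False"
      proof (cases d)
        case True
        then show ?thesis using up.IH ua up.hyps(2) R(3)[of a True v] e by auto
      next
        case False
        then have az: "a \<notin> Z" using up.hyps(2) ua by auto
        have "reach E' Z S a False \<or> (b \<in> Z \<and> reach E' Z S a True \<and> reach E' Z S b True) \<or> (b \<notin> Z \<and> reach E' Z S b False)"
          using up.IH ua False by auto
        then show ?thesis
        proof (elim disjE)
          assume "reach E' Z S a False" then show ?thesis using R(3)[of a False v] az e by auto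
        next
          assume "b \<in> Z \<and> reach E' Z S a True \<and> reach E' Z S b True"
          then show ?thesis using R(3)[of b True v] e by auto
        next
          assume "b \<notin> Z \<and> reach E' Z S b False"
          then show ?thesis using R(3)[of b False v] e by auto
        qed
      qed
      then show ?thesis using vab by auto
    next
      case una: False
      show ?thesis
      proof (cases "u = b")
        case ub: True
        show ?thesis
        proof (cases "v = a")
          case va: True
          show ?thesis
          proof (cases d)
            case True
            then have bz: "b \<in> Z" using up.hyps(2) ub by auto
            have "(reach E' Z S a True \<and> reach E' Z S b True) \<or> (a \<notin> Z \<and> reach E' Z S a False)
              \<or> (a \<notin> Z \<and> b \<notin> Z \<and> reach E' Z S b False)" using up.IH ub anb True by auto
            then show ?thesis using va bz by auto
          next
            case False
            then have "b \<notin> Z" "reach E' Z S b False" using up.hyps(2) up.IH ub anb by auto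
            then show ?thesis using va by auto
          qed
        next
          case vna: False
          have vb: "v \<noteq> b" using up.hyps(3) ub bb by auto
          have e: "(v,a) \<in> E'" "(v,b) \<in> E'" using E'iff up.hyps(3) ub vna cov[of v] by auto
          have "reach E' Z S v False"
          proof (cases d)
            case True
            then have bz: "b \<in> Z" using up.hyps(2) ub by auto
            have "(reach E' Z S a True \<and> reach E' Z S b True) \<or> (a \<notin> Z \<and> reach E' Z S a False)
              \<or> (a \<notin> Z \<and> b \<notin> Z \<and> reach E' Z S b False)" using up.IH ub anb True by auto
            then show ?thesis
            proof (elim disjE)
              assume "reach E' Z S a True \<and> reach E' Z S b True"
              then show ?thesis using R(3)[of b True v] bz e by auto
            next
              assume "a \<notin> Z \<and> reach E' Z S a False"
              then show ?thesis using R(3)[of a False v] e by auto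
            next
              assume "a \<notin> Z \<and> b \<notin> Z \<and> reach E' Z S b False"
              then show ?thesis using bz by auto
            qed
          next
            case False
            then have "b \<notin> Z" "reach E' Z S b False" using up.hyps(2) up.IH ub anb by auto
            then show ?thesis using R(3)[of b False v] e by auto
          qed
          then show ?thesis using vna vb by auto
        qed
      next
        case unb: False
        have ru: "reach E' Z S u d" using up.IH una unb by auto
        have e: "(v,u) \<in> E'" using E'iff up.hyps(3) una unb by auto
        have rv: "reach E' Z S v False" using R(3)[OF ru up.hyps(2) e] .
        show ?thesis
        proof (cases "v = a")
          case True then show ?thesis using rv by auto
        next
          case False then show ?thesis using rv by auto
        qed
      qed
    qed
  }
qed

lemma covered_reach:
  fixes E E' :: "(nat \<times> nat) set"
  assumes ab: "(a,b) \<in> E" and ba: "(b,a) \<notin> E" and aa: "(a,a) \<notin> E"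
    and cov: "\<And>p. (p,b) \<in> E \<longleftrightarrow> p = a \<or> (p,a) \<in> E"
    and E': "E' = insert (b,a) (E - {(a,b)})"
    and r: "reach E Z S u d"
  shows "\<exists>d'. reach E' Z S u d'"
proof -
  note Q = covered_sim[OF ab ba aa cov E' r]
  note R = reach.intros[where E=E' and Z=Z and S=S]
  have anb: "a \<noteq> b" using ab aa by auto
  have e: "(b,a) \<in> E'" using E' by auto
  show ?thesis
  proof (cases "u = a")
    case True
    then show ?thesis using Q R(2)[of b False a] e by (cases d) auto
  next
    case una: False
    show ?thesis
    proof (cases "u = b")
      case True
      then show ?thesis using Q una R(3)[of a False b] e by (cases d) auto
    next
      case False then show ?thesis using Q una by auto
    qed
  qed
qed

lemma covered_equiv:
  fixes E E' :: "(nat \<times> nat) set"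
  assumes ab: "(a,b) \<in> E" and ba: "(b,a) \<notin> E" and aa: "(a,a) \<notin> E"
    and cov: "\<And>p. (p,b) \<in> E \<longleftrightarrow> p = a \<or> (p,a) \<in> E"
    and E': "E' = insert (b,a) (E - {(a,b)})"
  shows "(\<exists>d. reach E Z S u d) \<longleftrightarrow> (\<exists>d. reach E' Z S u d)"
proof
  assume "\<exists>d. reach E Z S u d"
  then show "\<exists>d. reach E' Z S u d" using covered_reach[OF ab ba aa cov E'] by blast
next
  have anb: "a \<noteq> b" using ab aa by auto
  have bb: "(b,b) \<notin> E" using cov[of b] anb ba by auto
  have ab': "(b,a) \<in> E'" and ba': "(a,b) \<notin> E'" and bb': "(b,b) \<notin> E'" using E' anb bb by auto
  have cov': "\<And>p. (p,a) \<in> E' \<longleftrightarrow> p = b \<or> (p,b) \<in> E'"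
    using E' cov anb aa by auto
  have E'': "E = insert (a,b) (E' - {(b,a)})" using E' ab ba anb by auto
  assume "\<exists>d. reach E' Z S u d"
  then show "\<exists>d. reach E Z S u d" using covered_reach[OF ab' ba' bb' cov' E''] by blast
qed

definition vs :: "(nat \<times> nat) set \<Rightarrow> nat \<Rightarrow> nat \<Rightarrow> nat \<Rightarrow> bool" where
  "vs E a c b \<longleftrightarrow> (a,c) \<in> E \<and> (b,c) \<in> E \<and> a \<noteq> b \<and> \<not> adjE E a b"

lemma find_covered:
  assumes fin: "finite E1" and ac1: "acyclic E1" and ac2: "acyclic E2"
    and sk: "\<And>a b. adjE E1 a b \<longleftrightarrow> adjE E2 a b"
    and v: "\<And>a c b. vs E1 a c b \<longleftrightarrow> vs E2 a c b"
    and ne: "E1 - E2 \<noteq> {}"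
  shows "\<exists>x y. (x,y) \<in> E1 - E2 \<and> (\<forall>p. (p,y) \<in> E1 \<longleftrightarrow> p = x \<or> (p,x) \<in> E1)"
proof -
  let ?D = "{y. \<exists>x. (x,y) \<in> E1 - E2}"
  have wf1: "wf (E1\<^sup>+)" using finite_acyclic_wf[OF fin ac1] wf_trancl by blast
  obtain y0 where "y0 \<in> ?D" using ne by auto
  then obtain y where yD: "y \<in> ?D" and ymin: "\<And>y'. (y',y) \<in> E1\<^sup>+ \<Longrightarrow> y' \<notin> ?D"
    using wf1 unfolding wf_eq_minimal by meson
  let ?P = "{x. (x,y) \<in> E1 - E2}"
  have wf2: "wf ((E1\<inverse>)\<^sup>+)" using finite_acyclic_wf[of "E1\<inverse>"] fin ac1 wf_trancl by auto
  obtain x0 where "x0 \<in> ?P" using yD by auto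
  then obtain x where xP: "x \<in> ?P" and xmax: "\<And>x'. (x',x) \<in> (E1\<inverse>)\<^sup>+ \<Longrightarrow> x' \<notin> ?P"
    using wf2 unfolding wf_eq_minimal by meson
  have xmax': "\<And>x'. (x,x') \<in> E1\<^sup>+ \<Longrightarrow> x' \<notin> ?P" using xmax by (simp add: trancl_converse)
  have xy: "(x,y) \<in> E1" "(x,y) \<notin> E2" using xP by auto
  have yx2: "(y,x) \<in> E2" using sk[of x y] xy by (auto simp: adjE_def)
  have yx1: "(y,x) \<notin> E1" using acyc_antisym[OF ac1 xy(1)] .
  have "\<forall>p. (p,y) \<in> E1 \<longleftrightarrow> p = x \<or> (p,x) \<in> E1"
  proof (intro allI iffI)
    fix p assume py: "(p,y) \<in> E1"
    show "p = x \<or> (p,x) \<in> E1"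
    proof (rule ccontr)
      assume "\<not> (p = x \<or> (p,x) \<in> E1)"
      then have pnx: "p \<noteq> x" and px1: "(p,x) \<notin> E1" by auto
      show False
      proof (cases "adjE E1 p x")
        case False
        then have "vs E1 p y x" using py xy pnx by (simp add: vs_def)
        then have "vs E2 p y x" using v by blast
        then show False using xy by (simp add: vs_def)
      next
        case True
        then have xp1: "(x,p) \<in> E1" using px1 by (simp add: adjE_def)
        have py2: "(p,y) \<in> E2" using xmax'[of p] xp1 py by auto
        have "adjE E2 x p" using sk True by (auto simp: adjE_def)
        moreover have "(x,p) \<notin> E2"
        proof
          assume "(x,p) \<in> E2"
          then have "(x,x) \<in> E2\<^sup>+" using py2 yx2 by (meson trancl.r_into_trancl trancl_into_trancl)
          then show False using ac2 by (simp add: acyclic_def)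
        qed
        ultimately have "(p,x) \<in> E2" by (simp add: adjE_def)
        then have "(x,p) \<notin> E2" using acyc_antisym[OF ac2] by blast
        then have "p \<in> ?D" using xp1 by auto
        then show False using ymin[of p] py by auto
      qed
    qed
  next
    fix p assume h: "p = x \<or> (p,x) \<in> E1"
    show "(p,y) \<in> E1"
    proof (cases "p = x")
      case True then show ?thesis using xy by simp
    next
      case False
      then have px: "(p,x) \<in> E1" using h by simp
      have pny: "p \<noteq> y" using px yx1 by auto
      show ?thesis
      proof (rule ccontr)
        assume npy: "(p,y) \<notin> E1"
        have "(y,p) \<notin> E1"
        proof
          assume "(y,p) \<in> E1"
          then have "(p,p) \<in> E1\<^sup>+" using px xy by (meson trancl.r_into_trancl trancl_into_trancl)
          then show False using ac1 by (simp add: acyclic_def)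
        qed
        then have na: "\<not> adjE E2 p y" using npy sk[of p y] by (simp add: adjE_def)
        show False
        proof (cases "(p,x) \<in> E2")
          case True
          then have "vs E2 p x y" using yx2 pny na by (simp add: vs_def)
          then have "vs E1 p x y" using v by blast
          then show False using yx1 by (simp add: vs_def)
        next
          case False
          then have "x \<in> ?D" using px by auto
          then show False using ymin[of x] xy by auto
        qed
      qed
    qed
  qed
  then show ?thesis using xP by blast
qed

lemma chick:
  "finite E1 \<Longrightarrow> acyclic E1 \<Longrightarrow> acyclic E2 \<Longrightarrow> (\<forall>a b. adjE E1 a b \<longleftrightarrow> adjE E2 a b) \<Longrightarrow>
   (\<forall>a c b. vs E1 a c b \<longleftrightarrow> vs E2 a c b) \<Longrightarrow>
   (\<exists>d. reach E1 Z S u d) \<longleftrightarrow> (\<exists>d. reach E2 Z S u d)"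
proof (induction "card (E1 - E2)" arbitrary: E1 rule: less_induct)
  case less
  show ?case
  proof (cases "E1 - E2 = {}")
    case True
    have "E1 = E2"
    proof
      show "E1 \<subseteq> E2" using True by auto
      show "E2 \<subseteq> E1"
      proof
        fix e assume e: "e \<in> E2"
        obtain a b where eab: "e = (a,b)" by (cases e)
        have "adjE E1 a b" using less.prems(4) e eab by (auto simp: adjE_def)
        moreover have "(b,a) \<notin> E1"
          using True e eab acyc_antisym[OF less.prems(3)] by auto
        ultimately show "e \<in> E1" using eab by (auto simp: adjE_def)
      qed
    qed
    then show ?thesis by simp
  next
    case ne: False
    obtain x y where xy: "(x,y) \<in> E1 - E2" and cov: "\<And>p. (p,y) \<in> E1 \<longleftrightarrow> p = x \<or> (p,x) \<in> E1"
      using find_covered[OF less.prems(1-3) _ _ ne] less.prems(4,5) by blast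
    define E1' where "E1' = insert (y,x) (E1 - {(x,y)})"
    have xy1: "(x,y) \<in> E1" using xy by simp
    have yx1: "(y,x) \<notin> E1" using acyc_antisym[OF less.prems(2) xy1] .
    have xx: "(x,x) \<notin> E1" using acyc_irrefl[OF less.prems(2)] .
    have xny: "x \<noteq> y" using xy1 xx by auto
    have yx2: "(y,x) \<in> E2" using less.prems(4) xy by (auto simp: adjE_def)
    have eq: "(\<exists>d. reach E1 Z S u d) \<longleftrightarrow> (\<exists>d. reach E1' Z S u d)"
      using covered_equiv[OF xy1 yx1 xx cov E1'_def] .
    have fin': "finite E1'" using less.prems(1) by (simp add: E1'_def)
    have adj': "\<And>a b. adjE E1' a b \<longleftrightarrow> adjE E1 a b" using xy1 by (auto simp: E1'_def adjE_def)
    have ac0: "acyclic (E1 - {(x,y)})" using acyclic_subset[OF less.prems(2)] by blast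
    have "(x,y) \<notin> (E1 - {(x,y)})\<^sup>*"
    proof
      assume "(x,y) \<in> (E1 - {(x,y)})\<^sup>*"
      then have "(x,y) \<in> (E1 - {(x,y)})\<^sup>+" using xny by (simp add: rtrancl_eq_or_trancl)
      then obtain q where q: "(x,q) \<in> (E1 - {(x,y)})\<^sup>*" "(q,y) \<in> E1 - {(x,y)}" using tranclD2 by metis
      then have "q \<noteq> x" by auto
      then have "(q,x) \<in> E1" using cov q(2) by auto
      moreover have "(x,q) \<in> E1\<^sup>*" using q(1) rtrancl_mono[of "E1 - {(x,y)}" E1] by auto
      ultimately have "(x,x) \<in> E1\<^sup>+" by (simp add: rtrancl_into_trancl1)
      then show False using less.prems(2) by (simp add: acyclic_def)
    qed
    then have ac': "acyclic E1'" using ac0 by (simp add: E1'_def)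
    have vs': "\<And>a c b. vs E1' a c b \<longleftrightarrow> vs E1 a c b"
    proof -
      fix a c b
      have m: "\<And>u v. (u,v) \<in> E1' \<longleftrightarrow> (u,v) = (y,x) \<or> ((u,v) \<in> E1 \<and> (u,v) \<noteq> (x,y))"
        by (auto simp: E1'_def)
      show "vs E1' a c b \<longleftrightarrow> vs E1 a c b"
      proof
        assume h: "vs E1' a c b"
        then have h': "(a,c) \<in> E1'" "(b,c) \<in> E1'" "a \<noteq> b" "\<not> adjE E1 a b" using adj' by (auto simp: vs_def)
        have "(a,c) \<noteq> (y,x)"
        proof
          assume "(a,c) = (y,x)"
          then have "(b,x) \<in> E1" using h' m by auto
          then have "(b,y) \<in> E1" using cov by auto
          then show False using h' \<open>(a,c) = (y,x)\<close> by (auto simp: adjE_def)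
        qed
        moreover have "(b,c) \<noteq> (y,x)"
        proof
          assume "(b,c) = (y,x)"
          then have "(a,x) \<in> E1" using h' m by auto
          then have "(a,y) \<in> E1" using cov by auto
          then show False using h' \<open>(b,c) = (y,x)\<close> by (auto simp: adjE_def)
        qed
        ultimately show "vs E1 a c b" using h' m by (auto simp: vs_def)
      next
        assume h: "vs E1 a c b"
        then have h': "(a,c) \<in> E1" "(b,c) \<in> E1" "a \<noteq> b" "\<not> adjE E1 a b" by (auto simp: vs_def)
        have "(a,c) \<noteq> (x,y)"
        proof
          assume "(a,c) = (x,y)"
          then have "(b,x) \<in> E1" using h' cov by auto
          then show False using h' \<open>(a,c) = (x,y)\<close> by (auto simp: adjE_def)
        qed
        moreover have "(b,c) \<noteq> (x,y)"
        proof
          assume "(b,c) = (x,y)"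
          then have "(a,x) \<in> E1" using h' cov by auto
          then show False using h' \<open>(b,c) = (x,y)\<close> by (auto simp: adjE_def)
        qed
        ultimately show "vs E1' a c b" using h' m adj' by (auto simp: vs_def)
      qed
    qed
    have "E1' - E2 = (E1 - E2) - {(x,y)}" using yx2 by (auto simp: E1'_def)
    then have card: "card (E1' - E2) < card (E1 - E2)"
      using xy less.prems(1) by (metis card_Diff1_less finite_Diff)
    have "(\<exists>d. reach E1' Z S u d) \<longleftrightarrow> (\<exists>d. reach E2 Z S u d)"
      using less.hyps[OF card fin' ac' less.prems(3)] adj' vs' less.prems(4,5) by simp
    then show ?thesis using eq by simp
  qed
qed

lemma dag_acyclic: "dag V k G \<Longrightarrow> acyclic (edges G)"
  by (simp add: dag_def)

lemma dag_edge: "dag V k G \<Longrightarrow> (p,a) \<in> edges G \<Longrightarrow> p \<in> V \<and> a \<in> V \<and> p \<noteq> a"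
  unfolding dag_def edges_def by fastforce

lemma local_inv:
  assumes ac: "acyclic E" and Z: "Z = {p. (p,a) \<in> E}"
  shows "reach E Z {a} u d \<Longrightarrow> (d \<and> (a,u) \<in> E\<^sup>+) \<or> (\<not> d \<and> (u = a \<or> (u,a) \<in> E))"
proof (induction rule: reach.induct)
  case (base x) then show ?case by auto
next
  case (dn u d v)
  then show ?case using Z by (auto intro: trancl_into_trancl)
next
  case (up u d v)
  show ?case
  proof (cases d)
    case True
    then have "(a,u) \<in> E\<^sup>+" "(u,a) \<in> E" using up Z by auto
    then have "(a,a) \<in> E\<^sup>+" by (simp add: trancl_into_trancl)
    then show ?thesis using ac by (simp add: acyclic_def)
  next
    case False
    then have "u = a" using up Z by auto
    then show ?thesis using up by auto
  qed
qed

lemma local_sep: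
  assumes dg: "dag V k G" and ab: "a \<noteq> b" and na: "\<not> adjE (edges G) a b"
    and nd: "(a,b) \<notin> (edges G)\<^sup>+"
  shows "d_sep G {a} {b} {p. (p,a) \<in> edges G}"
proof -
  have ac: "acyclic (edges G)" using dag_acyclic[OF dg] .
  have aZ: "{a} \<inter> {p. (p,a) \<in> edges G} = {}" using acyc_irrefl[OF ac] by auto
  have "\<not> reach (edges G) {p. (p,a) \<in> edges G} {a} b d" for d
  proof
    assume r: "reach (edges G) {p. (p,a) \<in> edges G} {a} b d"
    from local_inv[OF ac refl r] show False using ab na nd by (auto simp: adjE_def)
  qed
  then show ?thesis using d_sep_reach[OF ac _ aZ] ab by auto
qed

lemma not_sep2:
  assumes "adjE (edges G) a b" "a \<noteq> b"
  shows "\<not> d_sep G {a} {b} Z"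
proof -
  have "d_connecting G Z [a,b]" using assms by (simp add: d_connecting_wk)
  moreover have "hd [a,b] \<in> {a}" "last [a,b] \<in> {b}" by auto
  ultimately show ?thesis unfolding d_sep_def by blast
qed

lemma not_sep3:
  assumes "adjE (edges G) a c" "adjE (edges G) c b" "distinct [a,c,b]" "tri (edges G) Z a c b"
  shows "\<not> d_sep G {a} {b} Z"
proof -
  have "d_connecting G Z [a,c,b]" using assms by (simp add: d_connecting_wk)
  moreover have "hd [a,c,b] \<in> {a}" "last [a,c,b] \<in> {b}" by auto
  ultimately show ?thesis unfolding d_sep_def by blast
qed

lemma me_sym: "markov_equiv V G1 G2 \<Longrightarrow> markov_equiv V G2 G1"
  unfolding markov_equiv_def by blast

lemma me_use: "markov_equiv V G1 G2 \<Longrightarrow> X \<subseteq> V \<Longrightarrow> Y \<subseteq> V \<Longrightarrow> Z \<subseteq> V \<Longrightarrow> X \<noteq> {} \<Longrightarrow> Y \<noteq> {}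
  \<Longrightarrow> X \<inter> Y = {} \<Longrightarrow> X \<inter> Z = {} \<Longrightarrow> Y \<inter> Z = {} \<Longrightarrow> d_sep G1 X Y Z \<Longrightarrow> d_sep G2 X Y Z"
  unfolding markov_equiv_def by blast

lemma sep_set:
  assumes dg: "dag V k G" and ab: "a \<noteq> b" and na: "\<not> adjE (edges G) a b"
  shows "(d_sep G {a} {b} {p. (p,a) \<in> edges G} \<and> (a,b) \<notin> (edges G)\<^sup>+) \<or>
         (d_sep G {b} {a} {p. (p,b) \<in> edges G} \<and> (b,a) \<notin> (edges G)\<^sup>+)"
proof -
  have ac: "acyclic (edges G)" using dag_acyclic[OF dg] .
  have "(a,b) \<notin> (edges G)\<^sup>+ \<or> (b,a) \<notin> (edges G)\<^sup>+"
    using ac by (meson acyclic_def trancl_trans)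
  moreover have "\<not> adjE (edges G) b a" using na by (auto simp: adjE_def)
  ultimately show ?thesis using local_sep[OF dg ab na] local_sep[OF dg _ _, of b a] ab by auto
qed

lemma skel_transfer:
  assumes d1: "dag V k G1" and d2: "dag V k G2" and me: "markov_equiv V G1 G2"
    and adj: "adjE (edges G1) a b"
  shows "adjE (edges G2) a b"
proof (rule ccontr)
  assume na: "\<not> adjE (edges G2) a b"
  have ab: "a \<noteq> b" "a \<in> V" "b \<in> V" using adj dag_edge[OF d1] by (auto simp: adjE_def)
  have pa: "{p. (p,x) \<in> edges G2} \<subseteq> V" "x \<notin> {p. (p,x) \<in> edges G2}" for x
    using dag_edge[OF d2] by auto
  from sep_set[OF d2 ab(1) na] show False
  proof
    assume h: "d_sep G2 {a} {b} {p. (p,a) \<in> edges G2} \<and> (a,b) \<notin> (edges G2)\<^sup>+"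
    have "d_sep G1 {a} {b} {p. (p,a) \<in> edges G2}"
      using me_use[OF me_sym[OF me]] h pa[of a] ab na by (auto simp: adjE_def)
    then show False using not_sep2[OF adj ab(1)] by blast
  next
    assume h: "d_sep G2 {b} {a} {p. (p,b) \<in> edges G2} \<and> (b,a) \<notin> (edges G2)\<^sup>+"
    have "d_sep G1 {b} {a} {p. (p,b) \<in> edges G2}"
      using me_use[OF me_sym[OF me]] h pa[of b] ab na by (auto simp: adjE_def)
    moreover have "adjE (edges G1) b a" using adj by (auto simp: adjE_def)
    ultimately show False using not_sep2[of G1 b a] ab by blast
  qed
qed

lemma vs_transfer:
  assumes d1: "dag V k G1" and d2: "dag V k G2" and me: "markov_equiv V G1 G2"
    and h: "vs (edges G1) a c b"
  shows "vs (edges G2) a c b"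
proof (rule ccontr)
  assume nv: "\<not> vs (edges G2) a c b"
  have me': "markov_equiv V G2 G1" using me_sym[OF me] .
  have e: "(a,c) \<in> edges G1" "(b,c) \<in> edges G1" "a \<noteq> b" "\<not> adjE (edges G1) a b" using h by (auto simp: vs_def)
  have inV: "a \<in> V" "b \<in> V" "c \<in> V" "a \<noteq> c" "b \<noteq> c" using e dag_edge[OF d1] by auto
  have adj2: "adjE (edges G2) a c" "adjE (edges G2) c b"
    using skel_transfer[OF d1 d2 me] e by (auto simp: adjE_def)
  have na2: "\<not> adjE (edges G2) a b" using skel_transfer[OF d2 d1 me'] e(4) by blast
  have nc: "\<not> ((a,c) \<in> edges G2 \<and> (b,c) \<in> edges G2)" using nv e(3) na2 by (auto simp: vs_def)
  have pa: "{p. (p,x) \<in> edges G1} \<subseteq> V" "x \<notin> {p. (p,x) \<in> edges G1}" for x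
    using dag_edge[OF d1] by auto
  have ac1: "acyclic (edges G1)" using dag_acyclic[OF d1] .
  have cna: "c \<notin> {p. (p,a) \<in> edges G1}" "c \<notin> {p. (p,b) \<in> edges G1}"
    using e acyc_antisym[OF ac1] by auto
  from sep_set[OF d1 e(3,4)] show False
  proof
    assume s: "d_sep G1 {a} {b} {p. (p,a) \<in> edges G1} \<and> (a,b) \<notin> (edges G1)\<^sup>+"
    have "d_sep G2 {a} {b} {p. (p,a) \<in> edges G1}"
      using me_use[OF me] s pa[of a] inV e by (auto simp: adjE_def)
    moreover have "tri (edges G2) {p. (p,a) \<in> edges G1} a c b" using nc cna unfolding tri_def by auto
    ultimately show False using not_sep3[OF adj2] inV e(3) by auto
  next
    assume s: "d_sep G1 {b} {a} {p. (p,b) \<in> edges G1} \<and> (b,a) \<notin> (edges G1)\<^sup>+"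
    have "d_sep G2 {b} {a} {p. (p,b) \<in> edges G1}"
      using me_use[OF me] s pa[of b] inV e by (auto simp: adjE_def)
    moreover have "tri (edges G2) {p. (p,b) \<in> edges G1} b c a" using nc cna by (auto simp: tri_def)
    moreover have "adjE (edges G2) b c" "adjE (edges G2) c a" using adj2 by (auto simp: adjE_def)
    ultimately show False using not_sep3[of G2 b c a] inV e(3) by auto
  qed
qed

lemma edges_Un: "edges (A \<union> B) = edges A \<union> edges B"
  by (auto simp: edges_def)

lemma edges_mono: "A \<subseteq> B \<Longrightarrow> edges A \<subseteq> edges B"
  by (auto simp: edges_def)

lemma me_trans: "markov_equiv V G1 G2 \<Longrightarrow> markov_equiv V G2 G3 \<Longrightarrow> markov_equiv V G1 G3"
  unfolding markov_equiv_def by simp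

lemma me_refl: "markov_equiv V G G"
  unfolding markov_equiv_def by simp

lemma finite_edges: "finite V \<Longrightarrow> dag V k G \<Longrightarrow> finite (edges G)"
proof -
  assume f: "finite V" and d: "dag V k G"
  have "edges G \<subseteq> V \<times> V" using dag_edge[OF d] by auto
  then show ?thesis using f finite_subset by blast
qed

lemma dag_sub: "dag V k G \<Longrightarrow> G \<subseteq> V \<times> Pow V"
proof
  fix f assume "dag V k G" "f \<in> G"
  then have "fst f \<in> V" "snd f \<subseteq> V" unfolding dag_def by auto
  then show "f \<in> V \<times> Pow V" by (cases f) auto
qed

lemma finite_dag: "finite V \<Longrightarrow> dag V k G \<Longrightarrow> finite G"
proof -
  assume "finite V" "dag V k G"
  moreover have "finite (V \<times> Pow V)" using \<open>finite V\<close> by simp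
  ultimately show ?thesis using dag_sub finite_subset by metis
qed

lemma finite_dags: "finite V \<Longrightarrow> finite (dags V k)"
proof -
  assume f: "finite V"
  have "dags V k \<subseteq> Pow (V \<times> Pow V)" using dag_sub unfolding dags_def by blast
  moreover have "finite (Pow (V \<times> Pow V))" using f by simp
  ultimately show ?thesis using finite_subset by blast
qed

lemma opt_ge: "finite V \<Longrightarrow> dag V k G \<Longrightarrow> score p G \<le> opt_score p V k"
  unfolding opt_score_def using finite_dags by (intro Max_ge) (auto simp: dags_def)

lemma score_Un: "finite A \<Longrightarrow> finite B \<Longrightarrow> A \<inter> B = {} \<Longrightarrow> score p (A \<union> B) = score p A + score p B"
  unfolding score_def by (simp add: sum.union_disjoint)

lemma acyc_union:
  assumes aA: "acyclic A" and aB: "acyclic B" and hA: "\<And>x y. (x,y) \<in> A \<Longrightarrow> x \<in> V"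
    and hB: "\<And>x y. (x,y) \<in> B \<Longrightarrow> y \<notin> V"
  shows "acyclic (A \<union> B)"
proof -
  have Bend: "(x,y) \<in> B\<^sup>+ \<Longrightarrow> y \<notin> V" for x y
    by (metis tranclE hB)
  have Astart: "(x,y) \<in> A\<^sup>* \<Longrightarrow> x \<notin> V \<Longrightarrow> x = y" for x y
    by (metis converse_rtranclE hA)
  have main: "(x,y) \<in> (A \<union> B)\<^sup>+ \<Longrightarrow> (x,y) \<in> A\<^sup>+ \<or> (\<exists>w. (x,w) \<in> A\<^sup>* \<and> (w,y) \<in> B\<^sup>+)" for x y
  proof (induction rule: trancl_induct)
    case (base y)
    then show ?case
    proof
      assume "(x,y) \<in> A" then show ?case by blast
    next
      assume "(x,y) \<in> B" then have "(x,y) \<in> B\<^sup>+" by blast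
      then show ?case by blast
    qed
  next
    case (step y z)
    from step.hyps(2) show ?case
    proof
      assume yz: "(y,z) \<in> A"
      from step.IH show ?case
      proof
        assume "(x,y) \<in> A\<^sup>+" then have "(x,z) \<in> A\<^sup>+" using yz by (rule trancl_into_trancl)
        then show ?case by blast
      next
        assume "\<exists>w. (x,w) \<in> A\<^sup>* \<and> (w,y) \<in> B\<^sup>+"
        then have "y \<notin> V" using Bend by auto
        then show ?case using hA[OF yz] by auto
      qed
    next
      assume yz: "(y,z) \<in> B"
      from step.IH show ?case
      proof
        assume "(x,y) \<in> A\<^sup>+"
        then have "(x,y) \<in> A\<^sup>*" by (rule trancl_into_rtrancl)
        moreover have "(y,z) \<in> B\<^sup>+" using yz by (rule r_into_trancl)
        ultimately show ?case by blast
      next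
        assume "\<exists>w. (x,w) \<in> A\<^sup>* \<and> (w,y) \<in> B\<^sup>+"
        then obtain w where "(x,w) \<in> A\<^sup>*" "(w,y) \<in> B\<^sup>+" by blast
        moreover have "(w,z) \<in> B\<^sup>+" using calculation(2) yz by (rule trancl_into_trancl)
        ultimately show ?case by blast
      qed
    qed
  qed
  show ?thesis unfolding acyclic_def
  proof (intro allI notI)
    fix x assume "(x,x) \<in> (A \<union> B)\<^sup>+"
    from main[OF this] show False
    proof
      assume "(x,x) \<in> A\<^sup>+" then show False using aA by (simp add: acyclic_def)
    next
      assume "\<exists>w. (x,w) \<in> A\<^sup>* \<and> (w,x) \<in> B\<^sup>+"
      then obtain w where w: "(x,w) \<in> A\<^sup>*" "(w,x) \<in> B\<^sup>+" by blast
      then have "x \<notin> V" using Bend by auto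
      then have "x = w" using Astart w(1) by auto
      then show False using w(2) aB by (simp add: acyclic_def)
    qed
  qed
qed

lemma restrict_dag:
  assumes d: "dag U k G" and cl: "\<forall>f\<in>G. fst f \<in> V \<longrightarrow> snd f \<subseteq> V" and VU: "V \<subseteq> U"
  shows "dag V k {f\<in>G. fst f \<in> V}"
proof -
  have "acyclic (edges {f\<in>G. fst f \<in> V})"
    by (rule acyclic_subset[OF dag_acyclic[OF d]]) (rule edges_mono, blast)
  moreover have "\<forall>f\<in>{f\<in>G. fst f \<in> V}. fst f \<in> V \<and> snd f \<subseteq> V - {fst f} \<and> card (snd f) \<le> k"
  proof
    fix f assume f: "f \<in> {f\<in>G. fst f \<in> V}"
    then have "snd f \<subseteq> U - {fst f}" "card (snd f) \<le> k" using d unfolding dag_def by auto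
    moreover have "snd f \<subseteq> V" using cl f by auto
    ultimately show "fst f \<in> V \<and> snd f \<subseteq> V - {fst f} \<and> card (snd f) \<le> k" using f by auto
  qed
  moreover have "\<forall>i\<in>V. \<exists>!P. (i, P) \<in> {f\<in>G. fst f \<in> V}"
  proof
    fix i assume i: "i \<in> V"
    then have "i \<in> U" using VU by auto
    then have "\<exists>!P. (i, P) \<in> G" using d unfolding dag_def by blast
    moreover have "(i, P) \<in> {f\<in>G. fst f \<in> V} \<longleftrightarrow> (i,P) \<in> G" for P using i by auto
    ultimately show "\<exists>!P. (i, P) \<in> {f\<in>G. fst f \<in> V}" by simp
  qed
  ultimately show ?thesis unfolding dag_def by (intro conjI)
qed

lemma combine_dag:
  assumes VU: "V \<subseteq> U" and dH: "dag V k H" and dG: "dag U k G"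
  shows "dag U k (H \<union> {f\<in>G. fst f \<notin> V})"
proof -
  have H: "\<forall>f\<in>H. fst f \<in> V \<and> snd f \<subseteq> V - {fst f} \<and> card (snd f) \<le> k" "\<forall>i\<in>V. \<exists>!P. (i, P) \<in> H"
    "acyclic (edges H)" using dH unfolding dag_def by auto
  have G: "\<forall>f\<in>G. fst f \<in> U \<and> snd f \<subseteq> U - {fst f} \<and> card (snd f) \<le> k" "\<forall>i\<in>U. \<exists>!P. (i, P) \<in> G"
    "acyclic (edges G)" using dG unfolding dag_def by auto
  have f1: "\<forall>f\<in>H \<union> {f\<in>G. fst f \<notin> V}. fst f \<in> U \<and> snd f \<subseteq> U - {fst f} \<and> card (snd f) \<le> k"
  proof
    fix f assume "f \<in> H \<union> {f\<in>G. fst f \<notin> V}"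
    then show "fst f \<in> U \<and> snd f \<subseteq> U - {fst f} \<and> card (snd f) \<le> k"
    proof
      assume "f \<in> H" then show ?thesis using H(1) VU by auto
    next
      assume "f \<in> {f\<in>G. fst f \<notin> V}" then show ?thesis using G(1) by auto
    qed
  qed
  have f2: "\<forall>i\<in>U. \<exists>!P. (i, P) \<in> H \<union> {f\<in>G. fst f \<notin> V}"
  proof
    fix i assume iU: "i \<in> U"
    show "\<exists>!P. (i, P) \<in> H \<union> {f\<in>G. fst f \<notin> V}"
    proof (cases "i \<in> V")
      case True
      have "(i,P) \<in> H \<union> {f\<in>G. fst f \<notin> V} \<longleftrightarrow> (i,P) \<in> H" for P using True by auto
      then show ?thesis using H(2) True by simp
    next
      case False
      have "(i,P) \<in> H \<union> {f\<in>G. fst f \<notin> V} \<longleftrightarrow> (i,P) \<in> G" for P using False H(1) by auto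
      then show ?thesis using G(2) iU by simp
    qed
  qed
  have ac: "acyclic (edges H \<union> edges {f\<in>G. fst f \<notin> V})"
  proof (rule acyc_union[where V=V])
    show "acyclic (edges H)" using H(3) .
    show "acyclic (edges {f\<in>G. fst f \<notin> V})"
      by (rule acyclic_subset[OF G(3)]) (rule edges_mono, blast)
    show "\<And>x y. (x,y) \<in> edges H \<Longrightarrow> x \<in> V" using dag_edge[OF dH] by blast
    show "\<And>x y. (x,y) \<in> edges {f\<in>G. fst f \<notin> V} \<Longrightarrow> y \<notin> V" by (auto simp: edges_def)
  qed
  show ?thesis unfolding dag_def using f1 f2 ac by (simp add: edges_Un)
qed

lemma skel_lift:
  assumes d1: "dag V k H1" and d2: "dag V k H2" and me: "markov_equiv V H1 H2"
  shows "adjE (edges (H1 \<union> GW)) a b \<longleftrightarrow> adjE (edges (H2 \<union> GW)) a b"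
proof -
  have "adjE (edges H1) a b \<longleftrightarrow> adjE (edges H2) a b"
    using skel_transfer[OF d1 d2 me] skel_transfer[OF d2 d1 me_sym[OF me]] by metis
  then show ?thesis unfolding edges_Un adjE_def by auto
qed

lemma vs_lift:
  assumes d1: "dag V k H1" and d2: "dag V k H2" and me: "markov_equiv V H1 H2"
    and GW: "\<forall>f\<in>GW. fst f \<notin> V"
    and h: "vs (edges (H1 \<union> GW)) a c b"
  shows "vs (edges (H2 \<union> GW)) a c b"
proof -
  have EW: "(x,y) \<in> edges GW \<Longrightarrow> y \<notin> V" for x y using GW by (auto simp: edges_def)
  have EH1: "(x,y) \<in> edges H1 \<Longrightarrow> y \<in> V" for x y using dag_edge[OF d1] by blast
  have e: "(a,c) \<in> edges H1 \<union> edges GW" "(b,c) \<in> edges H1 \<union> edges GW" "a \<noteq> b"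
      "\<not> adjE (edges (H1 \<union> GW)) a b" using h by (auto simp: vs_def edges_Un)
  have na2: "\<not> adjE (edges (H2 \<union> GW)) a b" using e(4) skel_lift[OF d1 d2 me] by metis
  show ?thesis
  proof (cases "c \<in> V")
    case True
    then have "(a,c) \<in> edges H1" "(b,c) \<in> edges H1" using e(1,2) EW by auto
    moreover have "\<not> adjE (edges H1) a b" using e(4) by (auto simp: adjE_def edges_Un)
    ultimately have "vs (edges H1) a c b" using e(3) by (simp add: vs_def)
    then have "vs (edges H2) a c b" using vs_transfer[OF d1 d2 me] by blast
    then show ?thesis using na2 by (auto simp: vs_def edges_Un)
  next
    case False
    then have "(a,c) \<in> edges GW" "(b,c) \<in> edges GW" using e(1,2) EH1 by auto
    then show ?thesis using na2 e(3) by (auto simp: vs_def edges_Un)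
  qed
qed

lemma combine_equiv:
  assumes VU: "V \<subseteq> U" and fU: "finite U" and d1: "dag V k H1" and d2: "dag V k H2"
    and me: "markov_equiv V H1 H2"
    and GW: "\<forall>f\<in>GW. fst f \<notin> V"
    and D1: "dag U k (H1 \<union> GW)" and D2: "dag U k (H2 \<union> GW)"
  shows "markov_equiv U (H1 \<union> GW) (H2 \<union> GW)"
proof -
  let ?E1 = "edges (H1 \<union> GW)" and ?E2 = "edges (H2 \<union> GW)"
  have me': "markov_equiv V H2 H1" using me_sym[OF me] .
  have sk: "\<forall>a b. adjE ?E1 a b \<longleftrightarrow> adjE ?E2 a b" using skel_lift[OF d1 d2 me] by blast
  have vsE: "\<forall>a c b. vs ?E1 a c b \<longleftrightarrow> vs ?E2 a c b"
    using vs_lift[OF d1 d2 me GW] vs_lift[OF d2 d1 me' GW] by blast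
  have ac1: "acyclic ?E1" using dag_acyclic[OF D1] .
  have ac2: "acyclic ?E2" using dag_acyclic[OF D2] .
  have fin1: "finite ?E1" using finite_edges[OF fU D1] .
  have R: "(\<exists>d. reach ?E1 Z S u d) \<longleftrightarrow> (\<exists>d. reach ?E2 Z S u d)" for Z S u
    using chick[OF fin1 ac1 ac2 sk vsE] .
  show ?thesis unfolding markov_equiv_def
  proof (intro allI impI)
    fix X Y Z assume h: "X \<subseteq> U \<and> Y \<subseteq> U \<and> Z \<subseteq> U \<and> X \<noteq> {} \<and> Y \<noteq> {} \<and> X \<inter> Y = {} \<and> X \<inter> Z = {} \<and> Y \<inter> Z = {}"
    then have XY: "X \<inter> Y = {}" and XZ: "X \<inter> Z = {}" by auto
    have "d_sep (H1 \<union> GW) X Y Z \<longleftrightarrow> \<not> (\<exists>y\<in>Y. \<exists>d. reach ?E1 Z X y d)" using d_sep_reach[OF ac1 XY XZ] .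
    also have "\<dots> \<longleftrightarrow> \<not> (\<exists>y\<in>Y. \<exists>d. reach ?E2 Z X y d)" using R by blast
    also have "\<dots> \<longleftrightarrow> d_sep (H2 \<union> GW) X Y Z" using d_sep_reach[OF ac2 XY XZ] by simp
    finally show "d_sep (H1 \<union> GW) X Y Z \<longleftrightarrow> d_sep (H2 \<union> GW) X Y Z" .
  qed
qed

lemma in_E0:
  assumes VU: "V \<subseteq> {..<d}" and cl: "\<forall>f\<in>G. fst f \<in> V \<longrightarrow> snd f \<subseteq> V"
    and dG: "dag {..<d} k G" and sc: "score p G \<ge> opt_score p {..<d} k - \<gamma>"
    and ec: "is_EC V k E0" and opt0: "\<forall>G\<in>E0. score p G = opt_score p V k"
    and gap: "\<forall>E. is_EC V k E \<and> E \<noteq> E0 \<longrightarrow> (\<forall>G\<in>E. score p G < opt_score p V k - \<gamma>)"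
  shows "{f\<in>G. fst f \<in> V} \<in> E0"
proof (rule ccontr)
  assume nin: "{f\<in>G. fst f \<in> V} \<notin> E0"
  let ?GV = "{f\<in>G. fst f \<in> V}" and ?GW = "{f\<in>G. fst f \<notin> V}"
  have dV: "dag V k ?GV" using restrict_dag[OF dG cl VU] .
  let ?EC = "{G'. dag V k G' \<and> markov_equiv V ?GV G'}"
  have isec: "is_EC V k ?EC" unfolding is_EC_def using dV by blast
  have inec: "?GV \<in> ?EC" using dV me_refl by blast
  have "?EC \<noteq> E0" using inec nin by blast
  then have lt: "score p ?GV < opt_score p V k - \<gamma>" using gap isec inec by blast
  obtain G0 where G0: "dag V k G0" "E0 = {G'. dag V k G' \<and> markov_equiv V G0 G'}"
    using ec unfolding is_EC_def by blast
  have "G0 \<in> E0" using G0 me_refl by blast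
  then have s0: "score p G0 = opt_score p V k" using opt0 by blast
  have fV: "finite V" using VU finite_subset by blast
  have fU: "finite {..<d::nat}" by simp
  have fG: "finite G" using finite_dag[OF fU dG] .
  have fGW: "finite ?GW" using fG by simp
  have fGV: "finite ?GV" using fG by simp
  have fG0: "finite G0" using finite_dag[OF fV G0(1)] .
  have dH: "dag {..<d} k (G0 \<union> ?GW)" using combine_dag[OF VU G0(1) dG] .
  have disj: "G0 \<inter> ?GW = {}" using G0(1) unfolding dag_def by auto
  have sH: "score p (G0 \<union> ?GW) = score p G0 + score p ?GW" using score_Un[OF fG0 fGW disj] .
  have GeqU: "G = ?GV \<union> ?GW" by auto
  have sG: "score p G = score p ?GV + score p ?GW"
    using score_Un[OF fGV fGW] GeqU by (metis (no_types, lifting) disjoint_iff mem_Collect_eq)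
  have "score p (G0 \<union> ?GW) \<le> opt_score p {..<d} k" using opt_ge[OF fU dH] .
  then show False using sH sG s0 lt sc by linarith
qed

theorem lemma5:
  fixes p :: "(nat \<Rightarrow> 'b) pmf" and d k :: nat and \<gamma> :: real and V :: "nat set"
    and A :: "family set" and E_star E_tilde :: "family set set" and G_star :: "family set"
  assumes "k > 0"
    and "finite (set_pmf p)"
    and "stable p d k \<gamma> V"
    and "A \<subseteq> families d k"
    and "is_EC {..<d} k E_star"
    and "\<forall>G\<in>E_star. score p G = opt_score p {..<d} k"
    and "G_star \<in> cap E_star A"
    and "is_EC {..<d} k E_tilde"
    and "E_tilde \<noteq> E_star"
    and "\<forall>G\<in>E_tilde. score p G \<ge> opt_score p {..<d} k - \<gamma>"
    and "cap E_tilde A \<noteq> {}"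
  shows "\<exists>G\<in>cap E_tilde A. {f\<in>G. fst f \<in> V} = {f\<in>G_star. fst f \<in> V}"
proof -
  let ?U = "{..<d}"
  have gam: "\<gamma> > 0" and VU: "V \<subseteq> ?U"
    and S1: "\<forall>G. dag ?U k G \<and> score p G \<ge> opt_score p ?U k - \<gamma> \<longrightarrow> (\<forall>f\<in>G. fst f \<in> V \<longrightarrow> snd f \<subseteq> V)"
    and S2: "\<exists>E0. is_EC V k E0 \<and> (\<forall>G\<in>E0. score p G = opt_score p V k)
          \<and> (\<forall>E. is_EC V k E \<and> E \<noteq> E0 \<longrightarrow> (\<forall>G\<in>E. score p G < opt_score p V k - \<gamma>))"
    using assms(3) unfolding stable_def by blast+
  obtain E0 where ec: "is_EC V k E0" and opt0: "\<forall>G\<in>E0. score p G = opt_score p V k"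
    and gap: "\<forall>E. is_EC V k E \<and> E \<noteq> E0 \<longrightarrow> (\<forall>G\<in>E. score p G < opt_score p V k - \<gamma>)"
    using S2 by blast
  obtain G0 where G0: "dag V k G0" "E0 = {G'. dag V k G' \<and> markov_equiv V G0 G'}"
    using ec unfolding is_EC_def by blast
  have Gs: "G_star \<in> E_star" "A \<subseteq> G_star" using assms(7) unfolding cap_def by auto
  obtain Gs0 where "dag ?U k Gs0" "E_star = {G'. dag ?U k G' \<and> markov_equiv ?U Gs0 G'}"
    using assms(5) unfolding is_EC_def by blast
  then have dGs: "dag ?U k G_star" using Gs by blast
  have scs: "score p G_star \<ge> opt_score p ?U k - \<gamma>" using assms(6) Gs gam by auto
  obtain Gt where Gt: "Gt \<in> E_tilde" "A \<subseteq> Gt" using assms(11) unfolding cap_def by auto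
  obtain Gt0 where Gt0: "dag ?U k Gt0" "E_tilde = {G'. dag ?U k G' \<and> markov_equiv ?U Gt0 G'}"
    using assms(8) unfolding is_EC_def by blast
  have dGt: "dag ?U k Gt" and meT: "markov_equiv ?U Gt0 Gt" using Gt Gt0 by auto
  have sct: "score p Gt \<ge> opt_score p ?U k - \<gamma>" using assms(10) Gt by auto
  have clS: "\<forall>f\<in>G_star. fst f \<in> V \<longrightarrow> snd f \<subseteq> V" using S1 dGs scs by blast
  have clT: "\<forall>f\<in>Gt. fst f \<in> V \<longrightarrow> snd f \<subseteq> V" using S1 dGt sct by blast
  let ?H1 = "{f\<in>Gt. fst f \<in> V}" and ?H2 = "{f\<in>G_star. fst f \<in> V}" and ?GW = "{f\<in>Gt. fst f \<notin> V}"
  have H1: "?H1 \<in> E0" using in_E0[OF VU clT dGt sct ec opt0 gap] .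
  have H2: "?H2 \<in> E0" using in_E0[OF VU clS dGs scs ec opt0 gap] .
  have d1: "dag V k ?H1" and m1: "markov_equiv V G0 ?H1" using H1 G0(2) by auto
  have d2: "dag V k ?H2" and m2: "markov_equiv V G0 ?H2" using H2 G0(2) by auto
  have me: "markov_equiv V ?H1 ?H2" using me_trans[OF me_sym[OF m1] m2] .
  have GtEq: "Gt = ?H1 \<union> ?GW" by auto
  have dN: "dag ?U k (?H2 \<union> ?GW)" using combine_dag[OF VU d2 dGt] .
  have D1: "dag ?U k (?H1 \<union> ?GW)" using dGt GtEq by simp
  have GW: "\<forall>f\<in>?GW. fst f \<notin> V" by auto
  have "markov_equiv ?U (?H1 \<union> ?GW) (?H2 \<union> ?GW)"
    using combine_equiv[OF VU _ d1 d2 me GW D1 dN] by simp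
  then have "markov_equiv ?U Gt (?H2 \<union> ?GW)" using GtEq by simp
  then have "markov_equiv ?U Gt0 (?H2 \<union> ?GW)" using me_trans[OF meT] by blast
  then have inT: "?H2 \<union> ?GW \<in> E_tilde" using Gt0(2) dN by blast
  have "A \<subseteq> ?H2 \<union> ?GW" using Gs(2) Gt(2) by auto
  then have "?H2 \<union> ?GW \<in> cap E_tilde A" using inT unfolding cap_def by blast
  moreover have "{f \<in> ?H2 \<union> ?GW. fst f \<in> V} = ?H2" by auto
  ultimately show ?thesis by blast
qed

end
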